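(* Let $G\subseteq\mathrm{GL}_n(\mathbb R)$ be a Zariski-closed subgroup that is closed under transposes and under non-zero scalar multiples, let $G_{\mathrm{SL}}=\{g\in G:\det g=1\}$, and let $Y\in(\mathbb R^n)^m$. If the MLE given $Y$ for the Gaussian group model $\mathcal M_G$ exists uniquely, then the stabilizer $(G_{\mathrm{SL}})_Y$ of $Y$ under the diagonal action is compact.
   Context: The Gaussian group model is $\mathcal M_G=\{g^{T}g:g\in G\}$, the centered Gaussians on $\mathbb R^n$ with these concentration matrices. For $Y=(Y_1,\dots,Y_m)$, the log-likelihood is $l_Y(\Psi)=\frac m2\log\det\Psi-\frac12\mathrm{Tr}(\Psi\sum_iY_iY_i^T)$ on $\mathcal M_G$, and an MLE is a maximizer of $l_Y$ on $\mathcal M_G$. $G_{\mathrm{SL}}$ acts diagonally: $g\cdot Y=(gY_1,\dots,gY_m)$, and $(G_{\mathrm{SL}})_Y=\{g\in G_{\mathrm{SL}}: g\cdot Y=Y\}$, with the subspace topology from $\mathrm{GL}_n(\mathbb R)$. *)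

theory Defs
  imports "HOL-Analysis.Analysis"
begin

inductive matrix_poly :: "(real^'n^'n \<Rightarrow> real) \<Rightarrow> bool" where
  mp_const: "matrix_poly (\<lambda>A. c)"
| mp_entry: "matrix_poly (\<lambda>A. A $ i $ j)"
| mp_add: "matrix_poly p \<Longrightarrow> matrix_poly q \<Longrightarrow> matrix_poly (\<lambda>A. p A + q A)"
| mp_mult: "matrix_poly p \<Longrightarrow> matrix_poly q \<Longrightarrow> matrix_poly (\<lambda>A. p A * q A)"

definition GL :: "(real^'n^'n) set" where
  "GL = {A. invertible A}"

definition zariski_closed_in_GL :: "(real^'n^'n) set \<Rightarrow> bool" where
  "zariski_closed_in_GL G \<longleftrightarrow>
     (\<exists>P. (\<forall>p\<in>P. matrix_poly p) \<and> G = {A \<in> GL. \<forall>p\<in>P. p A = 0})"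

definition subgroup_GL :: "(real^'n^'n) set \<Rightarrow> bool" where
  "subgroup_GL G \<longleftrightarrow> G \<subseteq> GL \<and> mat 1 \<in> G \<and>
     (\<forall>g\<in>G. \<forall>h\<in>G. g ** h \<in> G) \<and> (\<forall>g\<in>G. matrix_inv g \<in> G)"

definition G_SL :: "(real^'n^'n) set \<Rightarrow> (real^'n^'n) set" where
  "G_SL G = {g \<in> G. det g = 1}"

text \<open>Gaussian group model: concentration matrices g^T g, g in G.\<close>
definition gaussian_group_model :: "(real^'n^'n) set \<Rightarrow> (real^'n^'n) set" where
  "gaussian_group_model G = {transpose g ** g | g. g \<in> G}"

text \<open>Sample covariance-type matrix  sum_i Y_i Y_i^T  for a sample Y_1..Y_m
  (indexed 0..m-1).\<close>
definition sample_mat :: "nat \<Rightarrow> (nat \<Rightarrow> real^'n) \<Rightarrow> real^'n^'n" where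
  "sample_mat m Y = (\<Sum>i<m. (\<chi> a b. Y i $ a * Y i $ b))"

definition loglik :: "nat \<Rightarrow> (nat \<Rightarrow> real^'n) \<Rightarrow> real^'n^'n \<Rightarrow> real" where
  "loglik m Y \<Psi> = real m / 2 * ln (det \<Psi>) - 1/2 * trace (\<Psi> ** sample_mat m Y)"

definition is_MLE :: "(real^'n^'n) set \<Rightarrow> nat \<Rightarrow> (nat \<Rightarrow> real^'n) \<Rightarrow> real^'n^'n \<Rightarrow> bool" where
  "is_MLE G m Y \<Psi> \<longleftrightarrow> \<Psi> \<in> gaussian_group_model G \<and>
     (\<forall>\<Phi>\<in>gaussian_group_model G. loglik m Y \<Phi> \<le> loglik m Y \<Psi>)"

definition stabilizer_SL :: "(real^'n^'n) set \<Rightarrow> nat \<Rightarrow> (nat \<Rightarrow> real^'n) \<Rightarrow> (real^'n^'n) set" where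
  "stabilizer_SL G m Y = {g \<in> G_SL G. \<forall>i<m. g *v Y i = Y i}"

end

theory Submission
  imports Defs
begin

lemma mp_cont: "matrix_poly p \<Longrightarrow> continuous_on UNIV p"
proof (induction rule: matrix_poly.induct)
  case (mp_entry i j)
  show ?case by (intro continuous_intros)
qed (auto intro!: continuous_intros)

lemma det_cont: "continuous_on UNIV (det :: real^'n^'n \<Rightarrow> real)"
  unfolding det_def by (intro continuous_intros)

lemma mult_cont: "continuous_on UNIV (\<lambda>k::real^'n^'n. A ** k ** B)"
  unfolding matrix_matrix_mult_def by (intro continuous_intros)

lemma orth_compact: "compact {Q::real^'n^'n. transpose Q ** Q = mat 1}"
proof (subst compact_eq_bounded_closed, rule conjI[rotated])
  show "closed {Q::real^'n^'n. transpose Q ** Q = mat 1}"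
    by (rule closed_Collect_eq) (auto simp: matrix_matrix_mult_def transpose_def intro!: continuous_intros)
  show "bounded {Q::real^'n^'n. transpose Q ** Q = mat 1}"
    unfolding bounded_iff
  proof (intro exI ballI)
    fix Q :: "real^'n^'n" assume "Q \<in> {Q. transpose Q ** Q = mat 1}"
    then have "orthogonal_matrix Q" by (simp add: orthogonal_matrix)
    then have r: "norm (Q $ i) = 1" for i
      using orthogonal_matrix_orthonormal_rows[of Q]
      by (metis row_def vec_lambda_eta)
    have "norm Q = sqrt (\<Sum>i\<in>UNIV. (norm (Q$i))^2)" by (simp only: norm_vec_def L2_set_def)
    then show "norm Q \<le> sqrt (real CARD('n))"
      by (simp add: r)
  qed
qed

lemma outer_conj:
  fixes g :: "real^'n^'n" and x :: "real^'n"
  shows "g ** (\<chi> a b. x $ a * x $ b) ** transpose g = (\<chi> a b. (g *v x) $ a * (g *v x) $ b)"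
  by (simp add: vec_eq_iff matrix_matrix_mult_def matrix_vector_mult_def transpose_def
      sum_distrib_left sum_distrib_right mult_ac)

lemma my_rdistrib: "((B + C) ** (A::real^'n^'n)) = (B ** A) + (C ** A)"
  by (vector matrix_matrix_mult_def sum.distrib[symmetric] field_simps)

lemma sample_conj:
  fixes g :: "real^'n^'n"
  assumes "\<forall>i<m. g *v Y i = Y i"
  shows "g ** sample_mat m Y ** transpose g = sample_mat m Y"
  using assms
proof (induction m)
  case 0
  then show ?case by (simp add: sample_mat_def matrix_matrix_mult_def vec_eq_iff)
next
  case (Suc m)
  have "sample_mat (Suc m) Y = sample_mat m Y + (\<chi> a b. Y m $ a * Y m $ b)"
    by (simp add: sample_mat_def)
  then show ?case using Suc
    by (simp add: matrix_add_ldistrib my_rdistrib outer_conj)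
qed

theorem corollary2p4:
  fixes G :: "(real^'n^'n) set" and m :: nat and Y :: "nat \<Rightarrow> real^'n"
  assumes "subgroup_GL G"
    and "zariski_closed_in_GL G"
    and "\<forall>g\<in>G. transpose g \<in> G"
    and "\<forall>g\<in>G. \<forall>c::real. c \<noteq> 0 \<longrightarrow> c *\<^sub>R g \<in> G"
    and "\<exists>!\<Psi>. is_MLE G m Y \<Psi>"
  shows "compact (stabilizer_SL G m Y)"
proof -
  let ?S = "stabilizer_SL G m Y"
  obtain \<Psi> where mle: "is_MLE G m Y \<Psi>" and uniq: "\<And>\<Phi>. is_MLE G m Y \<Phi> \<Longrightarrow> \<Phi> = \<Psi>"
    using assms(5) by blast
  then obtain h where hG: "h \<in> G" and Psi: "\<Psi> = transpose h ** h"
    unfolding is_MLE_def gaussian_group_model_def by blast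
  have sg: "G \<subseteq> GL" "\<forall>g\<in>G. \<forall>k\<in>G. g ** k \<in> G"
    using assms(1) unfolding subgroup_GL_def by auto
  then have "invertible h" using hG unfolding GL_def by auto
  then obtain h' where hh': "h ** h' = mat 1" "h' ** h = mat 1"
    unfolding invertible_def by blast
  obtain P where P: "\<forall>p\<in>P. matrix_poly p" and GP: "G = {A \<in> GL. \<forall>p\<in>P. p A = 0}"
    using assms(2) unfolding zariski_closed_in_GL_def by blast
  have fix_Psi: "transpose g ** \<Psi> ** g = \<Psi>" if gS: "g \<in> ?S" for g
  proof -
    from gS have gG: "g \<in> G" and dg: "det g = 1" and gY: "\<forall>i<m. g *v Y i = Y i"
      unfolding stabilizer_SL_def G_SL_def by auto
    define \<Phi> where "\<Phi> = transpose (h ** g) ** (h ** g)"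
    have PhiM: "\<Phi> \<in> gaussian_group_model G"
      unfolding \<Phi>_def gaussian_group_model_def using sg(2) hG gG by blast
    have PhiE: "\<Phi> = transpose g ** \<Psi> ** g"
      unfolding \<Phi>_def Psi by (simp add: matrix_transpose_mul matrix_mul_assoc)
    have "det \<Phi> = det \<Psi>"
      unfolding PhiE by (simp add: det_mul dg)
    moreover have "trace (\<Phi> ** sample_mat m Y) = trace (\<Psi> ** sample_mat m Y)"
    proof -
      have "trace (\<Phi> ** sample_mat m Y) = trace ((transpose g ** (\<Psi> ** g)) ** sample_mat m Y)"
        unfolding PhiE by (simp add: matrix_mul_assoc)
      also have "\<dots> = trace (transpose g ** ((\<Psi> ** g) ** sample_mat m Y))"
        by (simp add: matrix_mul_assoc)
      also have "\<dots> = trace (((\<Psi> ** g) ** sample_mat m Y) ** transpose g)"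
        by (rule trace_mul_sym)
      also have "\<dots> = trace (\<Psi> ** (g ** sample_mat m Y ** transpose g))"
        by (simp add: matrix_mul_assoc)
      also have "\<dots> = trace (\<Psi> ** sample_mat m Y)"
        using sample_conj[OF gY] by simp
      finally show ?thesis .
    qed
    ultimately have "loglik m Y \<Phi> = loglik m Y \<Psi>"
      unfolding loglik_def by simp
    then have "is_MLE G m Y \<Phi>"
      using mle PhiM unfolding is_MLE_def by simp
    then have "\<Phi> = \<Psi>" by (rule uniq)
    then show ?thesis using PhiE by simp
  qed
  let ?O = "{Q::real^'n^'n. transpose Q ** Q = mat 1}"
  have sub: "?S \<subseteq> (\<lambda>k. h' ** k ** h) ` ?O"
  proof
    fix g assume gS: "g \<in> ?S"
    define k where "k = h ** g ** h'"
    have "transpose k ** k = transpose h' ** (transpose g ** \<Psi> ** g) ** h'"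
      unfolding k_def Psi by (simp add: matrix_transpose_mul matrix_mul_assoc)
    also have "\<dots> = transpose h' ** \<Psi> ** h'" using fix_Psi[OF gS] by simp
    also have "\<dots> = transpose (h ** h') ** (h ** h')"
      unfolding Psi by (simp add: matrix_transpose_mul matrix_mul_assoc)
    also have "\<dots> = mat 1" using hh' by (simp add: transpose_mat)
    finally have kO: "k \<in> ?O" by simp
    have "h' ** k ** h = (h' ** h) ** g ** (h' ** h)"
      unfolding k_def by (simp add: matrix_mul_assoc)
    also have "\<dots> = g" using hh' by simp
    finally have "g = h' ** k ** h" by simp
    then show "g \<in> (\<lambda>k. h' ** k ** h) ` ?O" using kO by (rule image_eqI)
  qed
  have cimg: "compact ((\<lambda>k. h' ** k ** h) ` ?O)"
    by (rule compact_continuous_image[OF continuous_on_subset[OF mult_cont] orth_compact]) simp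
  have Seq: "?S = {g. det g = 1} \<inter> (\<Inter>p\<in>P. {g. p g = 0}) \<inter> (\<Inter>i\<in>{..<m}. {g. g *v Y i = Y i})"
    unfolding stabilizer_SL_def G_SL_def GP GL_def
    by (auto simp: invertible_det_nz)
  have "closed ?S"
    unfolding Seq
  proof (intro closed_Int closed_INT ballI)
    show "closed {g::real^'n^'n. det g = 1}"
      by (rule closed_Collect_eq[OF det_cont continuous_on_const])
    show "closed {g. p g = 0}" if "p \<in> P" for p
      by (rule closed_Collect_eq[OF mp_cont continuous_on_const]) (use P that in auto)
    show "closed {g::real^'n^'n. g *v Y i = Y i}" for i
      by (rule closed_Collect_eq) (auto simp: matrix_vector_mult_def intro!: continuous_intros)
  qed
  then have "compact (((\<lambda>k. h' ** k ** h) ` ?O) \<inter> ?S)"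
    using cimg by (rule compact_Int_closed[rotated])
  moreover have "((\<lambda>k. h' ** k ** h) ` ?O) \<inter> ?S = ?S" using sub by blast
  ultimately show ?thesis by simp
qed

end
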